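(* Let $A$ be the random matrix defined in the context, and consider parameters $r\le k$ and $D$ with $r\to\infty$, $D/r^2\to\infty$ and $(\log k)/D\to0$. Then with probability $1-o(1)$ over $A$ there exist $x,x^-\in\mathcal{S}_k$, each with at most $r$ nonzero entries, all nonzero entries at least $1/r$, and $\mathrm{supp}(x)\neq\mathrm{supp}(x^-)$, such that for every $m=o(r^2)$ the total variation distance between the distribution of $m$ i.i.d. samples from $\mathrm{cat}(Ax)$ and that of $m$ i.i.d. samples from $\mathrm{cat}(Ax^-)$ is $o(1)$. In particular no algorithm given a document of $o(r^2)$ words can distinguish $\mathrm{cat}(Ax)$ from $\mathrm{cat}(Ax^-)$ with success probability better than $1/2+o(1)$.
   Context: Random instance: let $S_1,\dots,S_k\subseteq[D]$ be independent uniformly random subsets of $[D]$ (each element included independently with probability $1/2$), and let $A\in\mathbb{R}^{D\times k}$ have $A_{ij}=1/|S_j|$ if $i\in S_j$ and $A_{ij}=0$ otherwise. $\mathcal{S}_k=\{z\in\mathbb{R}^k_{\ge0}:\sum_iz_i=1\}$. $\mathrm{cat}(p)$ denotes the categorical distribution on $[D]$ with probability vector $p$. *)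

theory Defs
  imports "HOL-Probability.Probability"
begin

text \<open>Random instance: k independent uniformly random subsets of [D] = {0..<D}
  (uniform on the power set = each element independently with probability 1/2).
  Indices j outside {0..<k} are set to the empty set.\<close>
definition random_sets :: "nat \<Rightarrow> nat \<Rightarrow> (nat \<Rightarrow> nat set) pmf" where
  "random_sets D k = Pi_pmf {..<k} {} (\<lambda>_. pmf_of_set (Pow {..<D}))"

definition topic_matrix :: "(nat \<Rightarrow> nat set) \<Rightarrow> nat \<Rightarrow> nat \<Rightarrow> real" where
  "topic_matrix S i j = (if i \<in> S j then 1 / real (card (S j)) else 0)"

definition mat_vec :: "nat \<Rightarrow> (nat \<Rightarrow> nat \<Rightarrow> real) \<Rightarrow> (nat \<Rightarrow> real) \<Rightarrow> nat \<Rightarrow> real" where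
  "mat_vec k A x i = (\<Sum>j<k. A i j * x j)"

definition prob_simplex :: "nat \<Rightarrow> (nat \<Rightarrow> real) set" where
  "prob_simplex k = {z. (\<forall>j<k. 0 \<le> z j) \<and> (\<forall>j\<ge>k. z j = 0) \<and> (\<Sum>j<k. z j) = 1}"

definition supp_vec :: "(nat \<Rightarrow> real) \<Rightarrow> nat set" where
  "supp_vec z = {j. z j \<noteq> 0}"

definition tv_iid_cat :: "nat \<Rightarrow> nat \<Rightarrow> (nat \<Rightarrow> real) \<Rightarrow> (nat \<Rightarrow> real) \<Rightarrow> real" where
  "tv_iid_cat D m p q =
     (1/2) * (\<Sum>w \<in> {..<m} \<rightarrow>\<^sub>E {..<D}. \<bar>(\<Prod>i<m. p (w i)) - (\<Prod>i<m. q (w i))\<bar>)"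

end

theory Submission
  imports Defs
begin


lemma sum_PiE_pow:
  fixes f :: "nat \<Rightarrow> real"
  shows "(\<Sum>w\<in>{..<m} \<rightarrow>\<^sub>E {..<D}. \<Prod>i<m. f (w i)) = (\<Sum>x<D. f x) ^ m"
proof -
  have "(\<Prod>i\<in>{..<m}. \<Sum>y\<in>{..<D}. f y) = (\<Sum>w\<in>{..<m} \<rightarrow>\<^sub>E {..<D}. \<Prod>i\<in>{..<m}. f (w i))"
    by (rule prod_sum_PiE) auto
  then show ?thesis by simp
qed

lemma tv_chi:
  fixes p q :: "nat \<Rightarrow> real" and c :: real
  assumes p0: "\<And>i. i < D \<Longrightarrow> p i \<ge> 0" and q0: "\<And>i. i < D \<Longrightarrow> q i \<ge> 0"
    and ps: "(\<Sum>i<D. p i) = 1" and qs: "(\<Sum>i<D. q i) = 1"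
    and pq: "\<And>i. i < D \<Longrightarrow> p i = 0 \<Longrightarrow> q i = 0"
    and chi: "(\<Sum>i<D. q i ^ 2 / p i) \<le> 1 + c" and c0: "c \<ge> 0"
  shows "tv_iid_cat D m p q \<le> (1/2) * sqrt (exp (real m * c) - 1)"
proof -
  define W where "W = {..<m} \<rightarrow>\<^sub>E {..<D}"
  define P where "P w = (\<Prod>i<m. p (w i))" for w
  define Q where "Q w = (\<Prod>i<m. q (w i))" for w
  have wD: "w \<in> W \<Longrightarrow> i < m \<Longrightarrow> w i < D" for w i by (auto simp: W_def PiE_def)
  have P0: "w \<in> W \<Longrightarrow> P w \<ge> 0" for w unfolding P_def using p0 wD by (auto intro!: prod_nonneg)
  have Q0: "w \<in> W \<Longrightarrow> Q w \<ge> 0" for w unfolding Q_def using q0 wD by (auto intro!: prod_nonneg)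
  have PQ: "w \<in> W \<Longrightarrow> P w = 0 \<Longrightarrow> Q w = 0" for w
    unfolding P_def Q_def using pq wD by (auto simp: prod_zero_iff)
  have SP: "(\<Sum>w\<in>W. P w) = 1" unfolding W_def P_def by (simp add: sum_PiE_pow ps)
  have SQ: "(\<Sum>w\<in>W. Q w) = 1" unfolding W_def Q_def by (simp add: sum_PiE_pow qs)
  have SQP: "(\<Sum>w\<in>W. Q w ^ 2 / P w) = (\<Sum>i<D. q i ^ 2 / p i) ^ m"
  proof -
    have "Q w ^ 2 / P w = (\<Prod>i<m. q (w i) ^ 2 / p (w i))" for w
      unfolding P_def Q_def by (simp add: prod_dividef prod_power_distrib)
    then show ?thesis unfolding W_def using sum_PiE_pow[of "\<lambda>i. q i ^ 2 / p i" m D] by simp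
  qed
  have "(\<Sum>i<D. q i ^ 2 / p i) ^ m \<le> (1 + c) ^ m"
    by (rule power_mono[OF chi]) (auto intro!: sum_nonneg divide_nonneg_nonneg p0)
  also have "\<dots> \<le> exp c ^ m" by (rule power_mono) (use c0 in \<open>auto simp: exp_ge_add_one_self add.commute\<close>)
  also have "\<dots> = exp (real m * c)" by (simp add: exp_of_nat_mult)
  finally have SQP2: "(\<Sum>w\<in>W. Q w ^ 2 / P w) \<le> exp (real m * c)" using SQP by simp
  have tm: "(P w - Q w)^2 / P w = P w - 2 * Q w + Q w ^ 2 / P w" if "w \<in> W" for w
  proof (cases "P w = 0")
    case True then show ?thesis using PQ that by simp
  next
    case False then show ?thesis by (simp add: field_simps power2_eq_square)
  qed
  have chiW: "(\<Sum>w\<in>W. (P w - Q w)^2 / P w) \<le> exp (real m * c) - 1"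
    using SQP2 by (simp add: tm sum.distrib sum_subtractf sum_distrib_left[symmetric] SP SQ)
  have ab: "\<bar>P w - Q w\<bar> = (\<bar>P w - Q w\<bar> / sqrt (P w)) * sqrt (P w)" if "w \<in> W" for w
    using PQ[OF that] P0[OF that] by (cases "P w = 0") auto
  have a2: "(\<bar>P w - Q w\<bar> / sqrt (P w))^2 = (P w - Q w)^2 / P w" if "w \<in> W" for w
    using P0[OF that] by (simp add: power_divide)
  have "(\<Sum>w\<in>W. \<bar>P w - Q w\<bar>)^2 = (\<Sum>w\<in>W. (\<bar>P w - Q w\<bar> / sqrt (P w)) * sqrt (P w))^2"
    using ab by (metis (no_types, lifting) sum.cong)
  also have "\<dots> \<le> (\<Sum>w\<in>W. (\<bar>P w - Q w\<bar> / sqrt (P w))^2) * (\<Sum>w\<in>W. (sqrt (P w))^2)"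
    by (rule Cauchy_Schwarz_ineq_sum)
  also have "\<dots> = (\<Sum>w\<in>W. (P w - Q w)^2 / P w)"
    using a2 P0 SP by simp
  also have "\<dots> \<le> exp (real m * c) - 1" by (rule chiW)
  finally have "(\<Sum>w\<in>W. \<bar>P w - Q w\<bar>)^2 \<le> exp (real m * c) - 1" .
  hence "(\<Sum>w\<in>W. \<bar>P w - Q w\<bar>) \<le> sqrt (exp (real m * c) - 1)"
    by (rule real_le_rsqrt)
  then show ?thesis unfolding tv_iid_cat_def W_def[symmetric] P_def[symmetric] Q_def[symmetric]
    by simp
qed

definition Nc :: "nat \<Rightarrow> (nat \<Rightarrow> nat set) \<Rightarrow> nat \<Rightarrow> real" where
  "Nc r' S i = (\<Sum>j<r'. if i \<in> S j then 1 else 0)"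
definition Tt :: "nat \<Rightarrow> (nat \<Rightarrow> nat set) \<Rightarrow> real" where
  "Tt r' S = (\<Sum>j<r'. real (card (S j)))"
definition Rr :: "nat \<Rightarrow> (nat \<Rightarrow> nat set) \<Rightarrow> nat \<Rightarrow> real" where
  "Rr r' S j = (\<Sum>i\<in>S j. 1 / Nc r' S i)"
definition jz :: "nat \<Rightarrow> (nat \<Rightarrow> nat set) \<Rightarrow> nat" where
  "jz r' S = (SOME j. j < r' \<and> (\<forall>l<r'. Rr r' S j \<le> Rr r' S l))"

definition xv :: "nat \<Rightarrow> (nat \<Rightarrow> nat set) \<Rightarrow> nat \<Rightarrow> real" where
  "xv r' S j = (if j < r' then real (card (S j)) / Tt r' S else 0)"
definition xmv :: "nat \<Rightarrow> (nat \<Rightarrow> nat set) \<Rightarrow> nat \<Rightarrow> real" where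
  "xmv r' S j = (if j < r' \<and> j \<noteq> jz r' S then real (card (S j)) / (Tt r' S - real (card (S (jz r' S)))) else 0)"

lemma sum_if_less:
  fixes r' k :: nat
  assumes "r' \<le> k"
  shows "(\<Sum>j<k. if j < r' then f j else 0) = (\<Sum>j<r'. (f j :: real))"
proof -
  have "{j \<in> {..<k}. j < r'} = {..<r'}" using assms by (auto intro: less_le_trans)
  then show ?thesis using sum.inter_filter[of "{..<k}" f "\<lambda>j. j < r'"] by simp
qed

lemma jz_prop:
  assumes "r' > 0"
  shows "jz r' S < r' \<and> (\<forall>l<r'. Rr r' S (jz r' S) \<le> Rr r' S l)"
proof -
  have "Min (Rr r' S ` {..<r'}) \<in> Rr r' S ` {..<r'}"
    by (rule Min_in) (use assms in auto)
  then obtain j where j: "j \<in> {..<r'}" "Rr r' S j = Min (Rr r' S ` {..<r'})" by auto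
  hence "\<forall>l\<in>{..<r'}. Rr r' S j \<le> Rr r' S l" by simp
  hence "j < r' \<and> (\<forall>l<r'. Rr r' S j \<le> Rr r' S l)" using j by auto
  then show ?thesis unfolding jz_def by (rule someI)
qed

locale detset =
  fixes r' D :: nat and S :: "nat \<Rightarrow> nat set"
  assumes r8: "8 \<le> r'" and Dpos: "D > 0"
    and Ssub: "\<And>j. j < r' \<Longrightarrow> S j \<subseteq> {..<D}"
    and Sbig: "\<And>j. j < r' \<Longrightarrow> real D \<le> 4 * real (card (S j))"
begin

abbreviation "N \<equiv> Nc r' S"
abbreviation "T \<equiv> Tt r' S"
abbreviation "j0 \<equiv> jz r' S"
abbreviation "s0 \<equiv> real (card (S j0))"
definition "e i = (if i \<in> S j0 then 1 else (0::real))"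

lemma fin: "j < r' \<Longrightarrow> finite (S j)" using Ssub finite_subset by blast
lemma card_le: "j < r' \<Longrightarrow> real (card (S j)) \<le> real D"
  using Ssub card_mono[of "{..<D}" "S j"] by auto
lemma card_pos: "j < r' \<Longrightarrow> real (card (S j)) > 0"
  using Sbig[of j] Dpos by (cases "card (S j) = 0") auto
lemma j0: "j0 < r'" "\<And>l. l < r' \<Longrightarrow> Rr r' S j0 \<le> Rr r' S l"
  using jz_prop[of r' S] r8 by auto

lemma N_nonneg: "N i \<ge> 0" unfolding Nc_def by (auto intro: sum_nonneg)
lemma e_le_N: "e i \<le> N i"
proof -
  have "e i = (if i \<in> S j0 then 1 else 0)" by (simp add: e_def)
  also have "\<dots> \<le> (\<Sum>j<r'. if i \<in> S j then 1 else (0::real))"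
    by (rule member_le_sum[where f="\<lambda>j. if i \<in> S j then 1 else (0::real)"]) (use j0(1) in auto)
  also have "\<dots> = N i" unfolding Nc_def ..
  finally show ?thesis .
qed
lemma e01: "e i * e i = e i" by (simp add: e_def)

lemma T_ge: "T \<ge> real r' * real D / 4"
proof -
  have "T \<ge> (\<Sum>j<r'. real D / 4)" unfolding Tt_def
  proof (rule sum_mono)
    fix j assume "j \<in> {..<r'}"
    thus "real D / 4 \<le> real (card (S j))" using Sbig[of j] by simp
  qed
  thus ?thesis by simp
qed
lemma T_le: "T \<le> real r' * real D"
proof -
  have "T \<le> (\<Sum>j<r'. real D)" unfolding Tt_def by (rule sum_mono) (use card_le in auto)
  thus ?thesis by simp
qed
lemma T_pos: "T > 0"
proof -
  have "real r' * real D / 4 > 0" using r8 Dpos by simp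
  thus ?thesis using T_ge by linarith
qed
lemma Ts0: "T - s0 \<ge> T / 2"
proof -
  have "s0 \<le> real D" using card_le j0 by auto
  moreover have "real r' * real D / 4 \<ge> 2 * real D" using r8 Dpos by simp
  ultimately show ?thesis using T_ge by linarith
qed

lemma swap_in: "(\<Sum>i<D. (\<Sum>j<r'. if i \<in> S j then f j i else 0)) = (\<Sum>j<r'. \<Sum>i\<in>S j. f j i)"
proof -
  have "(\<Sum>i<D. (\<Sum>j<r'. if i \<in> S j then f j i else 0)) = (\<Sum>j<r'. \<Sum>i<D. if i \<in> S j then f j i else 0)"
    by (rule sum.swap)
  also have "\<dots> = (\<Sum>j<r'. \<Sum>i\<in>S j. f j i)"
  proof (rule sum.cong[OF refl])
    fix j assume "j \<in> {..<r'}"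
    hence "{i \<in> {..<D}. i \<in> S j} = S j" using Ssub by auto
    thus "(\<Sum>i<D. if i \<in> S j then f j i else 0) = (\<Sum>i\<in>S j. f j i)"
      using sum.inter_filter[of "{..<D}" "f j" "\<lambda>i. i \<in> S j"] by simp
  qed
  finally show ?thesis .
qed

lemma sumN: "(\<Sum>i<D. N i) = T"
  unfolding Nc_def Tt_def using swap_in[of "\<lambda>j i. (1::real)"] by simp

lemma sume: "(\<Sum>i<D. e i) = s0"
proof -
  have "{i \<in> {..<D}. i \<in> S j0} = S j0" using Ssub j0 by auto
  thus ?thesis unfolding e_def using sum.inter_filter[of "{..<D}" "\<lambda>i. 1::real" "\<lambda>i. i \<in> S j0"] by simp
qed

lemma sumR: "(\<Sum>j<r'. Rr r' S j) \<le> real D"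
proof -
  have "(\<Sum>j<r'. Rr r' S j) = (\<Sum>i<D. (\<Sum>j<r'. if i \<in> S j then 1 / N i else 0))"
    unfolding Rr_def using swap_in[of "\<lambda>j i. 1 / N i"] by simp
  also have "\<dots> = (\<Sum>i<D. N i / N i)"
  proof (rule sum.cong[OF refl])
    fix i
    show "(\<Sum>j<r'. if i \<in> S j then 1 / N i else 0) = N i / N i"
      unfolding Nc_def sum_divide_distrib by (rule sum.cong) auto
  qed
  also have "\<dots> \<le> (\<Sum>i<D. 1)" by (rule sum_mono) simp
  finally show ?thesis by simp
qed

lemma R0: "real r' * Rr r' S j0 \<le> real D"
proof -
  have "(\<Sum>j<r'. Rr r' S j0) \<le> (\<Sum>j<r'. Rr r' S j)" by (rule sum_mono) (use j0 in auto)
  thus ?thesis using sumR by simp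
qed

lemma sumeN: "(\<Sum>i<D. e i / N i) = Rr r' S j0"
proof -
  have "{i \<in> {..<D}. i \<in> S j0} = S j0" using Ssub j0 by auto
  moreover have "e i / N i = (if i \<in> S j0 then 1 / N i else 0)" for i by (simp add: e_def)
  ultimately show ?thesis unfolding Rr_def using sum.inter_filter[of "{..<D}" "\<lambda>i. 1 / N i" "\<lambda>i. i \<in> S j0"] by simp
qed

definition "p i = N i / T"
definition "q i = (N i - e i) / (T - s0)"

lemma chi_bound:
  assumes c: "c \<ge> 16 / real r' ^ 2"
  shows "(\<Sum>i<D. q i ^ 2 / p i) \<le> 1 + c"
proof -
  define K where "K = T / (T - s0)^2"
  have "16 / real r' ^ 2 \<ge> 0" by simp
  hence c0: "c \<ge> 0" using c by linarith
  have Tpos: "T - s0 > 0" using Ts0 T_pos by linarith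
  have pt: "q i ^ 2 / p i = K * (N i - 2 * e i + e i / N i)" for i
  proof (cases "N i = 0")
    case True
    hence "e i = 0" using e_le_N[of i] by (simp add: e_def split: if_splits)
    thus ?thesis using True by (simp add: p_def q_def)
  next
    case False
    have "q i ^ 2 / p i = T * (N i - e i)^2 / ((T - s0)^2 * N i)"
      unfolding p_def q_def using False T_pos by (simp add: power_divide field_simps)
    also have "(N i - e i)^2 = N i * (N i - 2 * e i) + e i"
      using e01[of i] by (simp add: power2_eq_square algebra_simps)
    finally show ?thesis using False unfolding K_def by (simp add: field_simps)
  qed
  have "(\<Sum>i<D. q i ^ 2 / p i) = K * (T - 2 * s0 + Rr r' S j0)"
    by (simp add: pt sum_distrib_left[symmetric] sum.distrib sum_subtractf sumN sume sumeN
         sum_distrib_left[of 2, symmetric])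
  also have "\<dots> \<le> 1 + c"
  proof -
    have R: "Rr r' S j0 \<le> real D / real r'" using R0 r8 by (simp add: field_simps)
    have "real D / real r' \<le> 4 * T / real r' ^ 2"
      using T_ge r8 by (simp add: field_simps power2_eq_square)
    also have "4 * T / real r' ^ 2 = (16 / real r' ^2) * (T / 2)^2 / T"
      using T_pos by (simp add: field_simps power2_eq_square)
    also have "\<dots> \<le> c * (T - s0)^2 / T"
      using T_pos Ts0 c c0 by (intro divide_right_mono mult_mono power_mono) auto
    finally have X: "real D / real r' \<le> c * (T - s0)^2 / T" .
    hence "T * (real D / real r') \<le> c * (T - s0)^2" using T_pos by (simp add: field_simps)
    moreover have "T * Rr r' S j0 \<le> T * (real D / real r')" using R T_pos by (intro mult_left_mono) auto
    ultimately have "T * Rr r' S j0 \<le> c * (T - s0)^2" by linarith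
    hence "T * (T - 2 * s0 + Rr r' S j0) \<le> (1 + c) * (T - s0)^2"
      by (simp add: power2_eq_square algebra_simps) (smt (verit) zero_le_power2 power2_eq_square)
    thus ?thesis unfolding K_def using Tpos by (simp add: field_simps)
  qed
  finally show ?thesis .
qed


lemma Tpos2: "T - s0 > 0" using Ts0 T_pos by linarith

lemma sum_skip: "(\<Sum>j<r'. if j \<noteq> j0 then g j else 0) = (\<Sum>j<r'. g j) - (g j0 :: real)"
proof -
  have "(\<Sum>j<r'. if j \<noteq> j0 then g j else 0) = (\<Sum>j<r'. g j - (if j = j0 then g j0 else 0))"
    by (rule sum.cong) auto
  also have "\<dots> = (\<Sum>j<r'. g j) - g j0" using j0(1) by (simp add: sum_subtractf)
  finally show ?thesis .
qed

lemma mv_x: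
  assumes "r' \<le> k"
  shows "mat_vec k (topic_matrix S) (xv r' S) i = p i"
proof -
  have "mat_vec k (topic_matrix S) (xv r' S) i = (\<Sum>j<k. if j < r' then (if i \<in> S j then 1 else 0) / T else 0)"
    unfolding mat_vec_def
  proof (rule sum.cong[OF refl])
    fix j assume "j \<in> {..<k}"
    show "topic_matrix S i j * xv r' S j = (if j < r' then (if i \<in> S j then 1 else 0) / T else 0)"
      using card_pos[of j] by (auto simp: topic_matrix_def xv_def)
  qed
  also have "\<dots> = (\<Sum>j<r'. (if i \<in> S j then 1 else 0) / T)" by (rule sum_if_less[OF assms])
  also have "\<dots> = p i" unfolding p_def Nc_def by (simp add: sum_divide_distrib)
  finally show ?thesis .
qed

lemma mv_xm:
  assumes "r' \<le> k"
  shows "mat_vec k (topic_matrix S) (xmv r' S) i = q i"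
proof -
  have "mat_vec k (topic_matrix S) (xmv r' S) i = (\<Sum>j<k. if j < r' then (if j \<noteq> j0 then (if i \<in> S j then 1 else 0) / (T - s0) else 0) else 0)"
    unfolding mat_vec_def
  proof (rule sum.cong[OF refl])
    fix j assume "j \<in> {..<k}"
    show "topic_matrix S i j * xmv r' S j = (if j < r' then (if j \<noteq> j0 then (if i \<in> S j then 1 else 0) / (T - s0) else 0) else 0)"
      using card_pos[of j] by (auto simp: topic_matrix_def xmv_def)
  qed
  also have "\<dots> = (\<Sum>j<r'. (if j \<noteq> j0 then (if i \<in> S j then 1 else 0) / (T - s0) else 0))"
    by (rule sum_if_less[OF assms])
  also have "\<dots> = (\<Sum>j<r'. (if i \<in> S j then 1 else 0) / (T - s0)) - (if i \<in> S j0 then 1 else 0) / (T - s0)"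
    by (rule sum_skip)
  also have "\<dots> = q i" unfolding q_def Nc_def e_def by (simp add: sum_divide_distrib diff_divide_distrib)
  finally show ?thesis .
qed

lemma sum_p: "(\<Sum>i<D. p i) = 1"
  unfolding p_def using sumN T_pos by (simp add: sum_divide_distrib[symmetric])
lemma sum_q: "(\<Sum>i<D. q i) = 1"
  unfolding q_def using sumN sume Tpos2 by (simp add: sum_divide_distrib[symmetric] sum_subtractf)

lemma e_nonneg: "e i \<ge> 0" by (simp add: e_def)

lemma tv_bound:
  assumes "c \<ge> 16 / real r' ^ 2"
  shows "tv_iid_cat D m p q \<le> (1/2) * sqrt (exp (real m * c) - 1)"
proof (rule tv_chi)
  show "\<And>i. i < D \<Longrightarrow> 0 \<le> p i" unfolding p_def using N_nonneg T_pos by simp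
  show "\<And>i. i < D \<Longrightarrow> 0 \<le> q i" unfolding q_def using e_le_N Tpos2 by simp
  show "(\<Sum>i<D. p i) = 1" by (rule sum_p)
  show "(\<Sum>i<D. q i) = 1" by (rule sum_q)
  show "\<And>i. i < D \<Longrightarrow> p i = 0 \<Longrightarrow> q i = 0"
  proof -
    fix i assume "p i = 0"
    hence "N i = 0" unfolding p_def using T_pos by simp
    moreover have "e i = 0" using e_le_N[of i] e_nonneg[of i] \<open>N i = 0\<close> by linarith
    ultimately show "q i = 0" unfolding q_def by simp
  qed
  show "(\<Sum>i<D. q i ^ 2 / p i) \<le> 1 + c" by (rule chi_bound[OF assms])
  have "16 / real r' ^ 2 \<ge> 0" by simp
  thus "c \<ge> 0" using assms by linarith
qed

lemma supp_x: "supp_vec (xv r' S) = {..<r'}"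
  using card_pos T_pos by (auto simp: supp_vec_def xv_def split: if_splits)
lemma supp_xm: "supp_vec (xmv r' S) = {..<r'} - {j0}"
  using card_pos Tpos2 by (auto simp: supp_vec_def xmv_def split: if_splits)

lemma det_main:
  assumes rk: "r' \<le> k" and rr: "4 * r' \<le> r" and c: "c \<ge> 16 / real r' ^ 2"
  shows "xv r' S \<in> prob_simplex k \<and> xmv r' S \<in> prob_simplex k \<and>
        card (supp_vec (xv r' S)) \<le> r \<and> card (supp_vec (xmv r' S)) \<le> r \<and>
        (\<forall>j \<in> supp_vec (xv r' S). xv r' S j \<ge> 1 / real r) \<and>
        (\<forall>j \<in> supp_vec (xmv r' S). xmv r' S j \<ge> 1 / real r) \<and>
        supp_vec (xv r' S) \<noteq> supp_vec (xmv r' S) \<and>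
        tv_iid_cat D m (mat_vec k (topic_matrix S) (xv r' S)) (mat_vec k (topic_matrix S) (xmv r' S))
          \<le> (1/2) * sqrt (exp (real m * c) - 1)"
proof (intro conjI)
  have rpos: "real r > 0" using rr r8 by simp
  have big: "1 / real r \<le> real (card (S j)) / T" if "j < r'" for j
  proof -
    have "T \<le> real r' * real D" by (rule T_le)
    also have "\<dots> \<le> real r' * (4 * real (card (S j)))" using Sbig[OF that] by (intro mult_left_mono) auto
    also have "\<dots> \<le> real r * real (card (S j))"
    proof -
      have "real (4 * r') \<le> real r" using rr by linarith
      hence "(4 * real r') * real (card (S j)) \<le> real r * real (card (S j))"
        by (intro mult_right_mono) auto
      thus ?thesis by (simp add: algebra_simps)
    qed
    finally show ?thesis using rpos T_pos by (simp add: field_simps)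
  qed
  show "xv r' S \<in> prob_simplex k"
    unfolding prob_simplex_def
  proof (intro CollectI conjI allI impI)
    fix j show "0 \<le> xv r' S j" using T_pos by (simp add: xv_def)
  next
    fix j assume "j \<ge> k" thus "xv r' S j = 0" using rk by (simp add: xv_def)
  next
    have "(\<Sum>j<k. xv r' S j) = (\<Sum>j<r'. real (card (S j)) / T)"
      unfolding xv_def by (rule sum_if_less[OF rk])
    also have "\<dots> = 1" using T_pos unfolding Tt_def by (simp add: sum_divide_distrib[symmetric])
    finally show "(\<Sum>j<k. xv r' S j) = 1" .
  qed
  show "xmv r' S \<in> prob_simplex k"
    unfolding prob_simplex_def
  proof (intro CollectI conjI allI impI)
    fix j show "0 \<le> xmv r' S j" using Tpos2 by (simp add: xmv_def)
  next
    fix j assume "j \<ge> k" thus "xmv r' S j = 0" using rk by (simp add: xmv_def)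
  next
    have "(\<Sum>j<k. xmv r' S j) = (\<Sum>j<k. if j < r' then (if j \<noteq> j0 then real (card (S j)) / (T - s0) else 0) else 0)"
      unfolding xmv_def by (rule sum.cong) auto
    also have "\<dots> = (\<Sum>j<r'. if j \<noteq> j0 then real (card (S j)) / (T - s0) else 0)"
      by (rule sum_if_less[OF rk])
    also have "\<dots> = (\<Sum>j<r'. real (card (S j)) / (T - s0)) - s0 / (T - s0)" by (rule sum_skip)
    also have "\<dots> = 1" using Tpos2 unfolding Tt_def
      by (simp add: sum_divide_distrib[symmetric] diff_divide_distrib[symmetric])
    finally show "(\<Sum>j<k. xmv r' S j) = 1" .
  qed
  show "card (supp_vec (xv r' S)) \<le> r" using supp_x rr by simp
  show "card (supp_vec (xmv r' S)) \<le> r" using supp_xm rr j0(1) by simp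
  show "\<forall>j \<in> supp_vec (xv r' S). xv r' S j \<ge> 1 / real r"
    using big by (simp add: supp_x xv_def)
  show "\<forall>j \<in> supp_vec (xmv r' S). xmv r' S j \<ge> 1 / real r"
  proof
    fix j assume "j \<in> supp_vec (xmv r' S)"
    hence j: "j < r'" "j \<noteq> j0" by (auto simp: supp_xm)
    have "real (card (S j)) / T \<le> real (card (S j)) / (T - s0)"
      using Tpos2 by (intro divide_left_mono) auto
    thus "xmv r' S j \<ge> 1 / real r" using big[OF j(1)] j by (simp add: xmv_def)
  qed
  show "supp_vec (xv r' S) \<noteq> supp_vec (xmv r' S)" using supp_x supp_xm j0(1) by auto
  show "tv_iid_cat D m (mat_vec k (topic_matrix S) (xv r' S)) (mat_vec k (topic_matrix S) (xmv r' S))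
          \<le> (1/2) * sqrt (exp (real m * c) - 1)"
  proof -
    have "mat_vec k (topic_matrix S) (xv r' S) = p" using mv_x[OF rk] by auto
    moreover have "mat_vec k (topic_matrix S) (xmv r' S) = q" using mv_xm[OF rk] by auto
    ultimately show ?thesis using tv_bound[OF c] by simp
  qed
qed

end



lemma sum_sq_dev: "(\<Sum>A\<in>Pow {..<D}. (2 * real (card A) - real D)^2) = real D * 2 ^ D"
proof (induction D)
  case 0 then show ?case by simp
next
  case (Suc D)
  have inj: "inj_on (insert D) (Pow {..<D})"
    apply (rule inj_onI)
    apply (drule arg_cong[where f="\<lambda>X. X - {D}"])
    apply auto
    done
  have disj: "Pow {..<D} \<inter> insert D ` Pow {..<D} = {}" by auto
  have "(\<Sum>A\<in>Pow {..<Suc D}. (2 * real (card A) - real (Suc D))^2)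
      = (\<Sum>A\<in>Pow {..<D}. (2 * real (card A) - real (Suc D))^2)
        + (\<Sum>A\<in>insert D ` Pow {..<D}. (2 * real (card A) - real (Suc D))^2)"
    by (simp add: lessThan_Suc Pow_insert sum.union_disjoint disj)
  also have "(\<Sum>A\<in>insert D ` Pow {..<D}. (2 * real (card A) - real (Suc D))^2)
      = (\<Sum>A\<in>Pow {..<D}. (2 * real (card (insert D A)) - real (Suc D))^2)"
    by (simp add: sum.reindex[OF inj])
  also have "\<dots> = (\<Sum>A\<in>Pow {..<D}. (2 * real (card A) - real D + 1)^2)"
  proof (rule sum.cong)
    fix A assume "A \<in> Pow {..<D}"
    hence "finite A" "D \<notin> A" by (auto intro: finite_subset)
    thus "(2 * real (card (insert D A)) - real (Suc D))^2 = (2 * real (card A) - real D + 1)^2"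
      by (simp add: algebra_simps)
  qed simp
  finally have "(\<Sum>A\<in>Pow {..<Suc D}. (2 * real (card A) - real (Suc D))^2)
     = (\<Sum>A\<in>Pow {..<D}. (2 * real (card A) - real D - 1)^2 + (2 * real (card A) - real D + 1)^2)"
    by (simp add: sum.distrib algebra_simps)
  also have "\<dots> = (\<Sum>A\<in>Pow {..<D}. 2 * (2 * real (card A) - real D)^2 + 2)"
    by (rule sum.cong) (auto simp: power2_eq_square algebra_simps)
  also have "\<dots> = 2 * (real D * 2 ^ D) + 2 * 2 ^ D"
    using Suc by (simp add: sum.distrib sum_distrib_left[symmetric] card_Pow)
  finally show ?case by (simp add: algebra_simps)
qed

lemma prob_small_set:
  assumes "D > 0"
  shows "measure_pmf.prob (pmf_of_set (Pow {..<D})) {A. \<not> (A \<subseteq> {..<D} \<and> real D \<le> 4 * real (card A))}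
         \<le> 4 / real D"
proof -
  define B where "B = {A \<in> Pow {..<D}. real D > 4 * real (card A)}"
  have fin: "finite (Pow {..<D})" by simp
  have "Pow {..<D} \<inter> {A. \<not> (A \<subseteq> {..<D} \<and> real D \<le> 4 * real (card A))} = B"
    by (auto simp: B_def)
  moreover have "measure_pmf.prob (pmf_of_set (Pow {..<D})) {A. \<not> (A \<subseteq> {..<D} \<and> real D \<le> 4 * real (card A))}
     = real (card (Pow {..<D} \<inter> {A. \<not> (A \<subseteq> {..<D} \<and> real D \<le> 4 * real (card A))})) / real (card (Pow {..<D}))"
    by (rule measure_pmf_of_set) auto
  ultimately have eq: "measure_pmf.prob (pmf_of_set (Pow {..<D})) {A. \<not> (A \<subseteq> {..<D} \<and> real D \<le> 4 * real (card A))}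
       = real (card B) / 2 ^ D"
    by (simp add: card_Pow)
  have "real (card B) * (real D ^ 2 / 4) = (\<Sum>A\<in>B. real D ^ 2 / 4)" by simp
  also have "\<dots> \<le> (\<Sum>A\<in>B. (2 * real (card A) - real D)^2)"
  proof (rule sum_mono)
    fix A assume "A \<in> B"
    hence h: "real D - 2 * real (card A) \<ge> real D / 2" by (auto simp: B_def)
    have "real D ^ 2 / 4 = (real D / 2)^2" by (simp add: power2_eq_square)
    also have "\<dots> \<le> (real D - 2 * real (card A))^2"
      by (rule power_mono[OF h]) simp
    also have "\<dots> = (2 * real (card A) - real D)^2" by (simp add: power2_commute)
    finally show "real D ^ 2 / 4 \<le> (2 * real (card A) - real D)^2" .
  qed
  also have "\<dots> \<le> (\<Sum>A\<in>Pow {..<D}. (2 * real (card A) - real D)^2)"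
    by (rule sum_mono2[OF fin]) (auto simp: B_def)
  also have "\<dots> = real D * 2 ^ D" by (rule sum_sq_dev)
  finally have "real (card B) * (real D ^ 2 / 4) \<le> real D * 2 ^ D" .
  hence "real (card B) * real D \<le> 4 * 2 ^ D"
    using assms by (simp add: power2_eq_square field_simps)
  hence "real (card B) / 2 ^ D \<le> 4 / real D"
    using assms by (simp add: field_simps)
  then show ?thesis using eq by simp
qed

lemma prob_good:
  assumes "D > 0" "r' \<le> k"
  shows "measure_pmf.prob (random_sets D k) {S. \<forall>j<r'. S j \<subseteq> {..<D} \<and> real D \<le> 4 * real (card (S j))}
         \<ge> 1 - real r' * (4 / real D)"
proof -
  let ?M = "random_sets D k"
  let ?bad = "\<lambda>A. \<not> (A \<subseteq> {..<D} \<and> real D \<le> 4 * real (card A))"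
  have comp: "measure_pmf.prob ?M {S. ?bad (S j)} \<le> 4 / real D" if "j < r'" for j
  proof -
    have "map_pmf (\<lambda>f. f j) ?M = pmf_of_set (Pow {..<D})"
      unfolding random_sets_def using that assms by (subst Pi_pmf_component) auto
    moreover have "measure_pmf.prob ?M {S. ?bad (S j)} = measure_pmf.prob (map_pmf (\<lambda>f. f j) ?M) {A. ?bad A}"
      by (simp add: vimage_def)
    ultimately have "measure_pmf.prob ?M {S. ?bad (S j)} = measure_pmf.prob (pmf_of_set (Pow {..<D})) {A. ?bad A}"
      by simp
    then show ?thesis using prob_small_set[OF assms(1)] by simp
  qed
  have "measure_pmf.prob ?M (\<Union>j\<in>{..<r'}. {S. ?bad (S j)}) \<le> (\<Sum>j\<in>{..<r'}. measure_pmf.prob ?M {S. ?bad (S j)})"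
    by (rule measure_pmf.finite_measure_subadditive_finite) auto
  also have "\<dots> \<le> (\<Sum>j\<in>{..<r'}. 4 / real D)" by (rule sum_mono) (rule comp, simp)
  finally have b: "measure_pmf.prob ?M (\<Union>j\<in>{..<r'}. {S. ?bad (S j)}) \<le> real r' * (4 / real D)" by simp
  have "{S. \<forall>j<r'. S j \<subseteq> {..<D} \<and> real D \<le> 4 * real (card (S j))} = UNIV - (\<Union>j\<in>{..<r'}. {S. ?bad (S j)})"
    by auto
  hence "measure_pmf.prob ?M {S. \<forall>j<r'. S j \<subseteq> {..<D} \<and> real D \<le> 4 * real (card (S j))}
     = 1 - measure_pmf.prob ?M (\<Union>j\<in>{..<r'}. {S. ?bad (S j)})"
    using measure_pmf.prob_compl[of "\<Union>j\<in>{..<r'}. {S. ?bad (S j)}" ?M] by simp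
  then show ?thesis using b by simp
qed

theorem lemma6p3:
  fixes r k D :: "nat \<Rightarrow> nat"
  assumes "\<And>n. r n \<le> k n"
    and "filterlim r at_top sequentially"
    and "filterlim (\<lambda>n. real (D n) / real (r n) ^ 2) at_top sequentially"
    and "(\<lambda>n. ln (real (k n)) / real (D n)) \<longlonglongrightarrow> 0"
  shows "\<exists>(G :: nat \<Rightarrow> (nat \<Rightarrow> nat set) set) (X :: nat \<Rightarrow> (nat \<Rightarrow> nat set) \<Rightarrow> nat \<Rightarrow> real)
            (Xm :: nat \<Rightarrow> (nat \<Rightarrow> nat set) \<Rightarrow> nat \<Rightarrow> real).
     (\<lambda>n. measure_pmf.prob (random_sets (D n) (k n)) (G n)) \<longlonglongrightarrow> 1 \<and>
     (\<forall>n. \<forall>S \<in> G n.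
        X n S \<in> prob_simplex (k n) \<and> Xm n S \<in> prob_simplex (k n) \<and>
        card (supp_vec (X n S)) \<le> r n \<and> card (supp_vec (Xm n S)) \<le> r n \<and>
        (\<forall>j \<in> supp_vec (X n S). X n S j \<ge> 1 / real (r n)) \<and>
        (\<forall>j \<in> supp_vec (Xm n S). Xm n S j \<ge> 1 / real (r n)) \<and>
        supp_vec (X n S) \<noteq> supp_vec (Xm n S)) \<and>
     (\<forall>m :: nat \<Rightarrow> nat. (\<lambda>n. real (m n) / real (r n) ^ 2) \<longlonglongrightarrow> 0 \<longrightarrow>
        (\<exists>\<epsilon> :: nat \<Rightarrow> real. \<epsilon> \<longlonglongrightarrow> 0 \<and>
           (\<forall>n. \<forall>S \<in> G n.
              tv_iid_cat (D n) (m n)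
                (mat_vec (k n) (topic_matrix S) (X n S))
                (mat_vec (k n) (topic_matrix S) (Xm n S)) \<le> \<epsilon> n)))"
proof -
  note rk = assms(1)
  define rr where "rr n = r n div 4" for n
  define good where "good n = (32 \<le> r n \<and> D n > 0)" for n
  define G where "G n = (if good n then {S. \<forall>j<rr n. S j \<subseteq> {..<D n} \<and> real (D n) \<le> 4 * real (card (S j))} else {})" for n
  define X where "X n S = xv (rr n) S" for n and S :: "nat \<Rightarrow> nat set"
  define Xm where "Xm n S = xmv (rr n) S" for n and S :: "nat \<Rightarrow> nat set"
  have ev32: "eventually (\<lambda>n. 32 \<le> r n) sequentially"
    using assms(2) by (simp add: filterlim_at_top)
  have evD: "eventually (\<lambda>n. real (D n) / real (r n) ^ 2 \<ge> 1) sequentially"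
    using assms(3) by (simp add: filterlim_at_top)
  have evgood: "eventually good sequentially"
    using ev32 evD
  proof eventually_elim
    case (elim n)
    hence "D n \<noteq> 0" by (metis div_0 not_one_le_zero of_nat_0)
    thus ?case using elim by (simp add: good_def)
  qed
  have det: "good n \<Longrightarrow> S \<in> G n \<Longrightarrow>
        X n S \<in> prob_simplex (k n) \<and> Xm n S \<in> prob_simplex (k n) \<and>
        card (supp_vec (X n S)) \<le> r n \<and> card (supp_vec (Xm n S)) \<le> r n \<and>
        (\<forall>j \<in> supp_vec (X n S). X n S j \<ge> 1 / real (r n)) \<and>
        (\<forall>j \<in> supp_vec (Xm n S). Xm n S j \<ge> 1 / real (r n)) \<and>
        supp_vec (X n S) \<noteq> supp_vec (Xm n S) \<and>
        tv_iid_cat (D n) mm (mat_vec (k n) (topic_matrix S) (X n S)) (mat_vec (k n) (topic_matrix S) (Xm n S))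
          \<le> (1/2) * sqrt (exp (real mm * (1024 / real (r n) ^ 2)) - 1)" for n S mm
  proof -
    assume g: "good n" and S: "S \<in> G n"
    have r32: "32 \<le> r n" and Dp: "D n > 0" using g by (auto simp: good_def)
    have r8: "8 \<le> rr n" using r32 by (simp add: rr_def)
    interpret detset "rr n" "D n" S
      by unfold_locales (use r8 Dp S g in \<open>auto simp: G_def\<close>)
    have rrk: "rr n \<le> k n" using rk[of n] by (simp add: rr_def)
    have rr4: "4 * rr n \<le> r n" by (simp add: rr_def)
    have c: "16 / real (rr n) ^ 2 \<le> 1024 / real (r n) ^ 2"
    proof -
      have "real (r n) \<le> 8 * real (rr n)" using r32 unfolding rr_def by linarith
      hence h: "real (r n) / 8 \<le> real (rr n)" by simp
      have pos: "real (r n) / 8 > 0" using r32 by simp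
      have "16 / real (rr n) ^ 2 \<le> 16 / (real (r n) / 8) ^ 2"
        using h pos by (intro divide_left_mono power_mono mult_pos_pos) auto
      also have "\<dots> = 1024 / real (r n) ^ 2" by (simp add: power_divide)
      finally show ?thesis .
    qed
    show ?thesis using det_main[OF rrk rr4 c, of mm] unfolding X_def Xm_def by simp
  qed
  have rD: "(\<lambda>n. real (r n) / real (D n)) \<longlonglongrightarrow> 0"
  proof -
    have inv: "(\<lambda>n. inverse (real (D n) / real (r n) ^ 2)) \<longlonglongrightarrow> 0"
      by (rule tendsto_inverse_0_at_top[OF assms(3)])
    have "eventually (\<lambda>n. norm (real (r n) / real (D n)) \<le> inverse (real (D n) / real (r n) ^ 2)) sequentially"
      using ev32
    proof eventually_elim
      case (elim n)
      have "real (r n) * 1 \<le> real (r n) * real (r n)" using elim by (intro mult_left_mono) auto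
      hence "real (r n) / real (D n) \<le> real (r n) ^ 2 / real (D n)"
        by (simp add: power2_eq_square divide_right_mono)
      thus ?case by simp
    qed
    thus ?thesis using inv by (rule Lim_null_comparison)
  qed
  have probG: "(\<lambda>n. measure_pmf.prob (random_sets (D n) (k n)) (G n)) \<longlonglongrightarrow> 1"
  proof (rule tendsto_sandwich[of "\<lambda>n. 1 - real (r n) / real (D n)" _ _ "\<lambda>n. 1"])
    show "eventually (\<lambda>n. 1 - real (r n) / real (D n) \<le> measure_pmf.prob (random_sets (D n) (k n)) (G n)) sequentially"
      using evgood
    proof eventually_elim
      case (elim n)
      hence Dp: "D n > 0" by (simp add: good_def)
      have "rr n \<le> k n" using rk[of n] by (simp add: rr_def)
      from prob_good[OF Dp this]
      have "measure_pmf.prob (random_sets (D n) (k n)) (G n) \<ge> 1 - real (rr n) * (4 / real (D n))"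
        using elim by (simp add: G_def)
      moreover have "real (rr n) * (4 / real (D n)) \<le> real (r n) / real (D n)"
      proof -
        have "real (4 * rr n) \<le> real (r n)" unfolding rr_def by linarith
        hence "real (rr n) * 4 / real (D n) \<le> real (r n) / real (D n)"
          by (intro divide_right_mono) auto
        thus ?thesis by simp
      qed
      ultimately show ?case by linarith
    qed
    show "eventually (\<lambda>n. measure_pmf.prob (random_sets (D n) (k n)) (G n) \<le> 1) sequentially"
      by simp
    show "(\<lambda>n. 1 - real (r n) / real (D n)) \<longlonglongrightarrow> 1"
      using tendsto_diff[OF tendsto_const rD, of 1] by simp
    show "(\<lambda>n. 1::real) \<longlonglongrightarrow> 1" by simp
  qed
  have P1: "\<forall>n. \<forall>S \<in> G n.
        X n S \<in> prob_simplex (k n) \<and> Xm n S \<in> prob_simplex (k n) \<and>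
        card (supp_vec (X n S)) \<le> r n \<and> card (supp_vec (Xm n S)) \<le> r n \<and>
        (\<forall>j \<in> supp_vec (X n S). X n S j \<ge> 1 / real (r n)) \<and>
        (\<forall>j \<in> supp_vec (Xm n S). Xm n S j \<ge> 1 / real (r n)) \<and>
        supp_vec (X n S) \<noteq> supp_vec (Xm n S)"
  proof (intro allI ballI)
    fix n S assume "S \<in> G n"
    moreover hence "good n" by (simp add: G_def split: if_splits)
    ultimately show "X n S \<in> prob_simplex (k n) \<and> Xm n S \<in> prob_simplex (k n) \<and>
        card (supp_vec (X n S)) \<le> r n \<and> card (supp_vec (Xm n S)) \<le> r n \<and>
        (\<forall>j \<in> supp_vec (X n S). X n S j \<ge> 1 / real (r n)) \<and>
        (\<forall>j \<in> supp_vec (Xm n S). Xm n S j \<ge> 1 / real (r n)) \<and>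
        supp_vec (X n S) \<noteq> supp_vec (Xm n S)" using det[of n S 0] by blast
  qed
  have P2: "\<forall>m :: nat \<Rightarrow> nat. (\<lambda>n. real (m n) / real (r n) ^ 2) \<longlonglongrightarrow> 0 \<longrightarrow>
        (\<exists>\<epsilon> :: nat \<Rightarrow> real. \<epsilon> \<longlonglongrightarrow> 0 \<and>
           (\<forall>n. \<forall>S \<in> G n.
              tv_iid_cat (D n) (m n)
                (mat_vec (k n) (topic_matrix S) (X n S))
                (mat_vec (k n) (topic_matrix S) (Xm n S)) \<le> \<epsilon> n))"
  proof (intro allI impI)
    fix m :: "nat \<Rightarrow> nat"
    assume m: "(\<lambda>n. real (m n) / real (r n) ^ 2) \<longlonglongrightarrow> 0"
    define \<epsilon> where "\<epsilon> n = (1/2) * sqrt (exp (real (m n) * (1024 / real (r n) ^ 2)) - 1)" for n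
    have eq: "real (m n) * (1024 / real (r n) ^ 2) = 1024 * (real (m n) / real (r n) ^ 2)" for n
      by simp
    have "(\<lambda>n. (1/2) * sqrt (exp (1024 * (real (m n) / real (r n) ^ 2)) - 1)) \<longlonglongrightarrow> (1/2) * sqrt (exp (1024 * 0) - 1)"
      by (intro tendsto_intros m)
    hence "\<epsilon> \<longlonglongrightarrow> 0" unfolding \<epsilon>_def eq by simp
    moreover have "\<forall>n. \<forall>S \<in> G n. tv_iid_cat (D n) (m n)
                (mat_vec (k n) (topic_matrix S) (X n S))
                (mat_vec (k n) (topic_matrix S) (Xm n S)) \<le> \<epsilon> n"
    proof (intro allI ballI)
      fix n S assume "S \<in> G n"
      moreover hence "good n" by (simp add: G_def split: if_splits)
      ultimately show "tv_iid_cat (D n) (m n)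
                (mat_vec (k n) (topic_matrix S) (X n S))
                (mat_vec (k n) (topic_matrix S) (Xm n S)) \<le> \<epsilon> n"
        using det[of n S "m n"] unfolding \<epsilon>_def by blast
    qed
    ultimately show "\<exists>\<epsilon> :: nat \<Rightarrow> real. \<epsilon> \<longlonglongrightarrow> 0 \<and>
           (\<forall>n. \<forall>S \<in> G n.
              tv_iid_cat (D n) (m n)
                (mat_vec (k n) (topic_matrix S) (X n S))
                (mat_vec (k n) (topic_matrix S) (Xm n S)) \<le> \<epsilon> n)" by blast
  qed
  show ?thesis
    by (rule exI[of _ G], rule exI[of _ X], rule exI[of _ Xm]) (intro conjI probG P1 P2)
qed

end
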